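(* Let $\Omega\subseteq\mathbb{R}^n$ be open and convex, let $f:\Omega\to\mathbb{R}$ be convex and differentiable with $\nabla f$ Lipschitz continuous with constant $L$ (extend $f$ by $+\infty$ outside $\Omega$), let $g:\mathbb{R}^n\to\mathbb{R}\cup\{+\infty\}$ be convex with closed sublevel sets, and let $h=f+g$ have compact sublevel sets and $h^\star=\inf_x h(x)<\infty$. Run the oracle-structured minimization method (described in the context) from $x^0\in\Omega$, with parameters satisfying $\mu_{\max}\tau_{\min}>2L/(1-\alpha)$. Then $h(x^k)\to h^\star$ as $k\to\infty$.
   Context: Oracle-structured minimization method (OSMM). Fixed parameters: memory $M\ge1$ (integer), $\alpha,\beta\in(0,1)$, $\tau_{\min}>0$, $0<\mu_{\min}\le\mu_{\max}$, $\gamma_{\rm dec}\in(0,1)$, $\gamma_{\rm inc}>1$, and an initial $\mu_0\in[\mu_{\min},\mu_{\max}]$. There is a constant $C$ and, for each $k$, a symmetric positive semidefinite matrix $H_k$ with $\|H_k\|_2\le C$ (otherwise arbitrary). For $k=0,1,2,\dots$: (1) $l_k(x)=\max_{i=\max\{0,k-M+1\},\dots,k}\big(f(x^i)+\nabla f(x^i)^T(x-x^i)\big)$; $\tau_k=\operatorname{Tr}(H_k)/n$; $\lambda_k=\mu_k(\tau_k+\tau_{\min})$. (2) $x^{k+1/2}=\operatorname*{argmin}_x\big(l_k(x)+g(x)+\tfrac12(x-x^k)^T(H_k+\lambda_kI)(x-x^k)\big)$, $v^k=x^{k+1/2}-x^k$. (3) With $\phi_k(t)=f(x^k+tv^k)+t\,g(x^{k+1/2})+(1-t)g(x^k)$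 for $t\in[0,1]$, let $t_k=\beta^j$ where $j$ is the smallest nonnegative integer with $\phi_k(t_k)\le h(x^k)-\frac{\alpha t_k}{2}(v^k)^T(H_k+\lambda_kI)v^k$; set $x^{k+1}=x^k+t_kv^k$. (4) $\mu_{k+1}=\max\{\gamma_{\rm dec}\mu_k,\mu_{\min}\}$ if $t_k=1$, and $\mu_{k+1}=\min\{\gamma_{\rm inc}\mu_k,\mu_{\max}\}$ if $t_k<1$. *)

theory Defs
  imports "HOL-Analysis.Analysis"
begin

definition extf :: "'a set \<Rightarrow> ('a \<Rightarrow> real) \<Rightarrow> 'a \<Rightarrow> ereal" where
  "extf \<Omega> f y = (if y \<in> \<Omega> then ereal (f y) else \<infinity>)"

definition convex_ereal :: "('a::real_vector \<Rightarrow> ereal) \<Rightarrow> bool" where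
  "convex_ereal g \<longleftrightarrow> (\<forall>x y t. 0 < t \<and> t < 1 \<longrightarrow>
      g ((1 - t) *\<^sub>R x + t *\<^sub>R y) \<le> ereal (1 - t) * g x + ereal t * g y)"

end

theory Submission
  imports Defs
begin

lemma line_deriv:
  fixes f :: "'a::real_inner \<Rightarrow> real"
  assumes "GDERIV f (x + s *\<^sub>R v) :> gradf (x + s *\<^sub>R v)"
  shows "((\<lambda>s. f (x + s *\<^sub>R v)) has_derivative (\<lambda>d. d * (v \<bullet> gradf (x + s *\<^sub>R v)))) (at s)"
proof -
  have 1: "((\<lambda>s. x + s *\<^sub>R v) has_derivative (\<lambda>d. d *\<^sub>R v)) (at s)"
    by (auto intro!: derivative_eq_intros)
  have 2: "(f has_derivative (\<lambda>h. h \<bullet> gradf (x + s *\<^sub>R v))) (at (x + s *\<^sub>R v))"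
    using assms by (simp add: gderiv_def)
  from has_derivative_compose[OF 1 2] show ?thesis
    by (simp add: o_def inner_commute)
qed

lemma tangent_ineq:
  fixes f :: "'a::real_inner \<Rightarrow> real"
  assumes op: "open \<Omega>" and cv: "convex \<Omega>" and fc: "convex_on \<Omega> f"
    and gr: "\<And>y. y \<in> \<Omega> \<Longrightarrow> GDERIV f y :> gradf y"
    and x: "x \<in> \<Omega>" and y: "y \<in> \<Omega>"
  shows "f x + gradf x \<bullet> (y - x) \<le> f y"
proof -
  define A where "A = {s::real. x + s *\<^sub>R (y - x) \<in> \<Omega>}"
  have Aeq: "A = (\<lambda>s. x + s *\<^sub>R (y - x)) -` \<Omega>" unfolding A_def by auto
  have oA: "open A" unfolding Aeq
    by (intro open_vimage op) (auto intro!: continuous_intros)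
  have cA: "convex A" unfolding A_def
  proof (rule convexI)
    fix a b u w :: real assume a: "a \<in> {s. x + s *\<^sub>R (y - x) \<in> \<Omega>}" and b: "b \<in> {s. x + s *\<^sub>R (y - x) \<in> \<Omega>}"
      and u: "0 \<le> u" "0 \<le> w" "u + w = 1"
    have "u *\<^sub>R (x + a *\<^sub>R (y - x)) + w *\<^sub>R (x + b *\<^sub>R (y - x)) \<in> \<Omega>"
      using a b u cv by (auto intro: convexD)
    moreover have "u *\<^sub>R (x + a *\<^sub>R (y - x)) + w *\<^sub>R (x + b *\<^sub>R (y - x)) = x + (u * a + w * b) *\<^sub>R (y - x)"
      using u by (simp add: algebra_simps flip: scaleR_add_left)
    ultimately show "u *\<^sub>R a + w *\<^sub>R b \<in> {s. x + s *\<^sub>R (y - x) \<in> \<Omega>}" by simp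
  qed
  have pc: "convex_on A (\<lambda>s. f (x + s *\<^sub>R (y - x)))"
  proof (rule convex_onI[OF _ cA])
    fix t a b :: real assume t: "0 < t" "t < 1" and a: "a \<in> A" and b: "b \<in> A"
    have "f ((1 - t) *\<^sub>R (x + a *\<^sub>R (y - x)) + t *\<^sub>R (x + b *\<^sub>R (y - x)))
       \<le> (1 - t) * f (x + a *\<^sub>R (y - x)) + t * f (x + b *\<^sub>R (y - x))"
      using a b t by (intro convex_onD[OF fc]) (auto simp: A_def)
    moreover have "(1 - t) *\<^sub>R (x + a *\<^sub>R (y - x)) + t *\<^sub>R (x + b *\<^sub>R (y - x)) = x + ((1 - t) * a + t * b) *\<^sub>R (y - x)"
      by (simp add: algebra_simps flip: scaleR_add_left)
    ultimately show "f (x + ((1 - t) *\<^sub>R a + t *\<^sub>R b) *\<^sub>R (y - x)) \<le> (1 - t) * f (x + a *\<^sub>R (y - x)) + t * f (x + b *\<^sub>R (y - x))"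
      by simp
  qed
  have 0: "0 \<in> A" "1 \<in> A" using x y by (auto simp: A_def)
  have d: "((\<lambda>s. f (x + s *\<^sub>R (y - x))) has_field_derivative ((y - x) \<bullet> gradf x)) (at 0 within A)"
  proof -
    have "((\<lambda>s. f (x + s *\<^sub>R (y - x))) has_derivative (\<lambda>d. d * ((y - x) \<bullet> gradf x))) (at 0)"
      using line_deriv[of f x 0 "y - x" gradf] gr[OF x] by simp
    then have "((\<lambda>s. f (x + s *\<^sub>R (y - x))) has_derivative (\<lambda>d. d * ((y - x) \<bullet> gradf x))) (at 0 within A)"
      by (rule has_derivative_at_withinI)
    moreover have "(\<lambda>d. d * ((y - x) \<bullet> gradf x)) = (*) ((y - x) \<bullet> gradf x)"
      by (rule ext) (simp add: mult.commute)
    ultimately show ?thesis by (simp add: has_field_derivative_def)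
  qed
  have "f (x + 1 *\<^sub>R (y - x)) - f (x + 0 *\<^sub>R (y - x)) \<ge> ((y - x) \<bullet> gradf x) * (1 - 0)"
    by (rule convex_on_imp_above_tangent[OF pc convex_connected[OF cA] _ 0(2) d])
       (use oA 0 interior_open in auto)
  then show ?thesis by (simp add: inner_commute)
qed

lemma descent_ineq:
  fixes f :: "'a::real_inner \<Rightarrow> real"
  assumes cv: "convex \<Omega>" and op: "open \<Omega>"
    and gr: "\<And>y. y \<in> \<Omega> \<Longrightarrow> GDERIV f y :> gradf y"
    and lip: "\<And>y z. y \<in> \<Omega> \<Longrightarrow> z \<in> \<Omega> \<Longrightarrow> norm (gradf y - gradf z) \<le> Lp * norm (y - z)"
    and x: "x \<in> \<Omega>" and xt: "x + t *\<^sub>R v \<in> \<Omega>" and t: "0 < t" and Lp: "0 \<le> Lp"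
  shows "f (x + t *\<^sub>R v) \<le> f x + t * (gradf x \<bullet> v) + Lp * t^2 * (norm v)^2"
proof -
  have seg: "x + s *\<^sub>R v \<in> \<Omega>" if "0 \<le> s" "s \<le> t" for s
  proof -
    have "(1 - s/t) *\<^sub>R x + (s/t) *\<^sub>R (x + t *\<^sub>R v) \<in> \<Omega>"
      using that t x xt by (intro convexD[OF cv]) auto
    moreover have "(1 - s/t) *\<^sub>R x + (s/t) *\<^sub>R (x + t *\<^sub>R v) = x + s *\<^sub>R v"
      using t by (simp add: algebra_simps)
    ultimately show ?thesis by simp
  qed
  obtain \<xi> where \<xi>: "\<xi> \<in> {0<..<t}"
    and eq: "f (x + t *\<^sub>R v) - f (x + 0 *\<^sub>R v) = (t - 0) * (v \<bullet> gradf (x + \<xi> *\<^sub>R v))"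
  proof -
    have "\<exists>\<xi>\<in>{0<..<t}. f (x + t *\<^sub>R v) - f (x + 0 *\<^sub>R v) = (\<lambda>d. d * (v \<bullet> gradf (x + \<xi> *\<^sub>R v))) (t - 0)"
    proof (rule mvt_simple[OF t])
      fix s assume "0 \<le> s" "s \<le> t"
      then show "((\<lambda>s. f (x + s *\<^sub>R v)) has_derivative (\<lambda>d. d * (v \<bullet> gradf (x + s *\<^sub>R v)))) (at s within {0..t})"
        using line_deriv[of f x s v gradf] gr seg by (auto intro: has_derivative_at_withinI)
    qed
    then show ?thesis using that by auto
  qed
  have "v \<bullet> gradf (x + \<xi> *\<^sub>R v) - v \<bullet> gradf x = v \<bullet> (gradf (x + \<xi> *\<^sub>R v) - gradf x)"
    by (simp add: inner_diff_right)
  also have "\<dots> \<le> norm v * norm (gradf (x + \<xi> *\<^sub>R v) - gradf x)"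
    using Cauchy_Schwarz_ineq2 by (metis abs_le_D1 Cauchy_Schwarz_ineq2)
  also have "\<dots> \<le> norm v * (Lp * norm (\<xi> *\<^sub>R v))"
    using lip[OF seg x] \<xi> by (intro mult_left_mono) auto
  also have "\<dots> \<le> norm v * (Lp * (t * norm v))"
    using \<xi> Lp by (intro mult_left_mono) (auto intro!: mult_right_mono)
  finally have "v \<bullet> gradf (x + \<xi> *\<^sub>R v) \<le> gradf x \<bullet> v + Lp * t * (norm v)^2"
    by (simp add: power2_eq_square algebra_simps inner_commute)
  then have "t * (v \<bullet> gradf (x + \<xi> *\<^sub>R v)) \<le> t * (gradf x \<bullet> v + Lp * t * (norm v)^2)"
    using t by (intro mult_left_mono) auto
  then show ?thesis using eq by (simp add: algebra_simps power2_eq_square)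
qed

lemma diag_bounds:
  fixes H :: "real^'n^'n"
  assumes psd: "\<And>w. 0 \<le> w \<bullet> (H *v w)" and bd: "onorm (\<lambda>w. H *v w) \<le> C"
  shows "0 \<le> H $ i $ i" "H $ i $ i \<le> C"
proof -
  have e: "H $ i $ i = axis i 1 \<bullet> (H *v axis i 1)"
    by (simp add: matrix_vector_mult_basis column_def inner_commute[of "axis i 1"] cart_eq_inner_axis[symmetric])
  show "0 \<le> H $ i $ i" using psd[of "axis i 1"] e by simp
  have "axis i 1 \<bullet> (H *v axis i 1) \<le> norm (axis i (1::real)) * norm (H *v axis i 1)"
    by (rule norm_cauchy_schwarz)
  also have "\<dots> = norm (H *v axis i 1)" by simp
  also have "\<dots> \<le> onorm (\<lambda>w. H *v w) * norm (axis i (1::real))"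
    by (rule onorm) (rule matrix_vector_mul_bounded_linear)
  also have "\<dots> \<le> C" using bd by simp
  finally show "H $ i $ i \<le> C" using e by simp
qed

lemma trace_bounds:
  fixes H :: "real^'n^'n"
  assumes psd: "\<And>w. 0 \<le> w \<bullet> (H *v w)" and bd: "onorm (\<lambda>w. H *v w) \<le> C"
  shows "0 \<le> trace H" "trace H \<le> real CARD('n) * C"
proof -
  show "0 \<le> trace H" unfolding trace_def using diag_bounds[OF psd bd] by (intro sum_nonneg) auto
  have "trace H \<le> (\<Sum>i\<in>(UNIV::'n set). C)" unfolding trace_def using diag_bounds[OF psd bd]
    by (intro sum_mono) auto
  then show "trace H \<le> real CARD('n) * C" by simp
qed

theorem mainTheorem3:
  fixes \<Omega> :: "(real^'n) set"
    and f :: "real^'n \<Rightarrow> real" and gradf :: "real^'n \<Rightarrow> real^'n"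
    and g :: "real^'n \<Rightarrow> ereal"
    and L C \<alpha> \<beta> \<tau>min \<mu>min \<mu>max \<gamma>dec \<gamma>inc :: real
    and M :: nat
    and H :: "nat \<Rightarrow> real^'n^'n"
    and x xh :: "nat \<Rightarrow> real^'n"
    and \<mu> :: "nat \<Rightarrow> real"
    and j :: "nat \<Rightarrow> nat"
  defines "h \<equiv> (\<lambda>y. extf \<Omega> f y + g y)"
  defines "lam \<equiv> (\<lambda>k. \<mu> k * (trace (H k) / real CARD('n) + \<tau>min))"
  defines "Q \<equiv> (\<lambda>k. H k + lam k *\<^sub>R mat 1)"
  defines "l \<equiv> (\<lambda>k y. Max ((\<lambda>i. f (x i) + gradf (x i) \<bullet> (y - x i)) ` {k + 1 - M..k}))"
  defines "v \<equiv> (\<lambda>k. xh k - x k)"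
  defines "\<phi> \<equiv> (\<lambda>k t. extf \<Omega> f (x k + t *\<^sub>R v k) + ereal t * g (xh k) + ereal (1 - t) * g (x k))"
  assumes \<Omega>_open: "open \<Omega>" and \<Omega>_convex: "convex \<Omega>"
    and f_convex: "convex_on \<Omega> f"
    and f_grad: "\<And>y. y \<in> \<Omega> \<Longrightarrow> GDERIV f y :> gradf y"
    and f_lip: "\<And>y z. y \<in> \<Omega> \<Longrightarrow> z \<in> \<Omega> \<Longrightarrow> norm (gradf y - gradf z) \<le> L * norm (y - z)"
    and g_not_minf: "\<And>y. g y \<noteq> -\<infinity>"
    and g_convex: "convex_ereal g"
    and g_closed_sublevel: "\<And>c::real. closed {y. g y \<le> ereal c}"
    and h_compact_sublevel: "\<And>c::real. compact {y. h y \<le> ereal c}"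
    and hstar_fin: "(INF y. h y) < \<infinity>"
    and M_pos: "M \<ge> 1"
    and \<alpha>: "0 < \<alpha>" "\<alpha> < 1" and \<beta>: "0 < \<beta>" "\<beta> < 1"
    and \<tau>min: "\<tau>min > 0"
    and \<mu>minmax: "0 < \<mu>min" "\<mu>min \<le> \<mu>max"
    and \<gamma>dec: "0 < \<gamma>dec" "\<gamma>dec < 1" and \<gamma>inc: "\<gamma>inc > 1"
    and \<mu>0: "\<mu>min \<le> \<mu> 0" "\<mu> 0 \<le> \<mu>max"
    and param: "\<mu>max * \<tau>min > 2 * L / (1 - \<alpha>)"
    and H_sym: "\<And>k. transpose (H k) = H k"
    and H_psd: "\<And>k w. 0 \<le> w \<bullet> (H k *v w)"
    and H_bound: "\<And>k. onorm (\<lambda>w. H k *v w) \<le> C"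
    and x0: "x 0 \<in> \<Omega>" and x0_dom: "g (x 0) < \<infinity>"
    and prox: "\<And>k y. ereal (l k (xh k)) + g (xh k) + ereal ((xh k - x k) \<bullet> (Q k *v (xh k - x k)) / 2)
                 \<le> ereal (l k y) + g y + ereal ((y - x k) \<bullet> (Q k *v (y - x k)) / 2)"
    and ls_ok: "\<And>k. \<phi> k (\<beta> ^ j k) \<le> h (x k) - ereal (\<alpha> * \<beta> ^ j k / 2 * (v k \<bullet> (Q k *v v k)))"
    and ls_min: "\<And>k i. i < j k \<Longrightarrow> \<not> (\<phi> k (\<beta> ^ i) \<le> h (x k) - ereal (\<alpha> * \<beta> ^ i / 2 * (v k \<bullet> (Q k *v v k))))"
    and x_step: "\<And>k. x (Suc k) = x k + (\<beta> ^ j k) *\<^sub>R v k"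
    and \<mu>_step: "\<And>k. \<mu> (Suc k) = (if \<beta> ^ j k = 1 then max (\<gamma>dec * \<mu> k) \<mu>min else min (\<gamma>inc * \<mu> k) \<mu>max)"
  shows "(\<lambda>k. h (x k)) \<longlonglongrightarrow> (INF y. h y)"
proof -
  define t where "t = (\<lambda>k. \<beta> ^ j k)"
  define Lp where "Lp = max L 1"
  define lmin where "lmin = \<mu>min * \<tau>min"
  define lmax where "lmax = \<mu>max * (C + \<tau>min)"
  define q where "q = (\<lambda>k. v k \<bullet> (Q k *v v k))"
  have Lp: "0 < Lp" unfolding Lp_def by simp
  have lip: "norm (gradf y - gradf z) \<le> Lp * norm (y - z)" if "y \<in> \<Omega>" "z \<in> \<Omega>" for y z
  proof -
    have "L * norm (y - z) \<le> Lp * norm (y - z)" unfolding Lp_def by (intro mult_right_mono) auto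
    then show ?thesis using f_lip[OF that] by linarith
  qed
  have tpos: "0 < t k" "t k \<le> 1" for k unfolding t_def using \<beta> by (auto simp: power_le_one)
  have C0: "0 \<le> C" using onorm_pos_le[OF matrix_vector_mul_bounded_linear, of "H 0"] H_bound[of 0] by simp
  have mu_bd: "\<mu>min \<le> \<mu> k \<and> \<mu> k \<le> \<mu>max" for k
  proof (induction k)
    case 0 then show ?case using \<mu>0 by simp
  next
    case (Suc k)
    have m: "0 < \<mu> k" using Suc \<mu>minmax by linarith
    have a0: "\<gamma>dec * \<mu> k \<le> 1 * \<mu> k" by (rule mult_right_mono) (use \<gamma>dec m in auto)
    have a: "\<gamma>dec * \<mu> k \<le> \<mu>max" using a0 Suc by linarith
    have b0: "1 * \<mu> k \<le> \<gamma>inc * \<mu> k" by (rule mult_right_mono) (use \<gamma>inc m in auto)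
    have b: "\<mu>min \<le> \<gamma>inc * \<mu> k" using b0 Suc by linarith
    show ?case unfolding \<mu>_step using Suc a b \<mu>minmax by auto
  qed
  have lam_bd: "lmin \<le> lam k \<and> lam k \<le> lmax" for k
  proof -
    have tr: "0 \<le> trace (H k) / real CARD('n)" "trace (H k) / real CARD('n) \<le> C"
      using trace_bounds[OF H_psd H_bound, of k] by (auto simp: divide_simps mult.commute)
    have "lmin \<le> \<mu> k * \<tau>min" unfolding lmin_def using mu_bd[of k] \<tau>min by (intro mult_right_mono) auto
    also have "\<dots> \<le> lam k" unfolding lam_def using mu_bd[of k] \<mu>minmax tr
      by (intro mult_left_mono) auto
    finally have 1: "lmin \<le> lam k" .
    have "lam k \<le> \<mu>max * (C + \<tau>min)" unfolding lam_def using mu_bd[of k] \<mu>minmax tr \<tau>min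
      by (intro mult_mono) auto
    then show ?thesis using 1 unfolding lmax_def by simp
  qed
  have lmin0: "0 < lmin" unfolding lmin_def using \<mu>minmax \<tau>min by simp
  have quad: "w \<bullet> (Q k *v w) = w \<bullet> (H k *v w) + lam k * (norm w)^2" for k w
    by (simp add: Q_def matrix_vector_mult_add_rdistrib scaleR_matrix_vector_assoc[symmetric]
        inner_add_right power2_norm_eq_inner)
  have q_lo: "lmin * (norm w)^2 \<le> w \<bullet> (Q k *v w)" for k w
  proof -
    have "lmin * (norm w)^2 \<le> lam k * (norm w)^2" using lam_bd[of k] by (intro mult_right_mono) auto
    then show ?thesis using quad[where k=k and w=w] H_psd[where k=k and w=w] by linarith
  qed
  have q_hi: "w \<bullet> (Q k *v w) \<le> (C + lmax) * (norm w)^2" for k w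
  proof -
    have "w \<bullet> (H k *v w) \<le> norm w * norm (H k *v w)" by (rule norm_cauchy_schwarz)
    also have "\<dots> \<le> norm w * (onorm (\<lambda>w. H k *v w) * norm w)"
      by (intro mult_left_mono onorm matrix_vector_mul_bounded_linear) auto
    also have "\<dots> \<le> norm w * (C * norm w)"
      using H_bound[of k] by (intro mult_left_mono mult_right_mono) auto
    finally have 1: "w \<bullet> (H k *v w) \<le> C * (norm w)^2" by (simp add: power2_eq_square mult_ac)
    have "lam k * (norm w)^2 \<le> lmax * (norm w)^2" using lam_bd[of k] by (intro mult_right_mono) auto
    then show ?thesis using quad[where k=k and w=w] 1 by (simp add: algebra_simps)
  qed
  have fin_ereal: "g y = ereal (real_of_ereal (g y))" if "g y \<noteq> \<infinity>" for y
    using that g_not_minf[of y] by (cases "g y") auto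
  have step: "g (xh k) \<noteq> \<infinity> \<and> x (Suc k) \<in> \<Omega> \<and> g (x (Suc k)) \<noteq> \<infinity>"
    if xk: "x k \<in> \<Omega>" and gk: "g (x k) \<noteq> \<infinity>" for k
  proof -
    obtain G where G: "g (x k) = ereal G" using fin_ereal[OF gk] by blast
    have hx: "h (x k) = ereal (f (x k) + G)" using xk G by (simp add: h_def extf_def)
    have ls: "\<phi> k (t k) \<le> ereal (f (x k) + G - \<alpha> * t k / 2 * q k)"
      using ls_ok[of k] hx unfolding t_def q_def by simp
    have tk: "0 < t k" "t k \<le> 1" using tpos by auto
    have ex_ne: "extf \<Omega> f z \<noteq> -\<infinity>" for z by (simp add: extf_def)
    have gh: "g (xh k) \<noteq> \<infinity>"
    proof
      assume a: "g (xh k) = \<infinity>"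
      have "\<phi> k (t k) = \<infinity>" unfolding \<phi>_def a G using tk ex_ne[of "x k + t k *\<^sub>R v k"]
        by (cases "extf \<Omega> f (x k + t k *\<^sub>R v k)") auto
      then show False using ls by simp
    qed
    obtain Gh where Gh: "g (xh k) = ereal Gh" using fin_ereal[OF gh] by blast
    have inO: "x k + t k *\<^sub>R v k \<in> \<Omega>"
    proof (rule ccontr)
      assume "x k + t k *\<^sub>R v k \<notin> \<Omega>"
      then have "\<phi> k (t k) = \<infinity>" unfolding \<phi>_def Gh G by (simp add: extf_def)
      then show False using ls by simp
    qed
    have xs: "x (Suc k) = x k + t k *\<^sub>R v k" using x_step unfolding t_def by simp
    have xs2: "x (Suc k) = (1 - t k) *\<^sub>R x k + t k *\<^sub>R xh k"
      unfolding xs v_def by (simp add: algebra_simps)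
    have "g (x (Suc k)) \<le> ereal ((1 - t k) * G + t k * Gh)"
    proof (cases "t k = 1")
      case True then show ?thesis using xs2 Gh by simp
    next
      case False
      then have "t k < 1" using tk by simp
      then have "g (x (Suc k)) \<le> ereal (1 - t k) * g (x k) + ereal (t k) * g (xh k)"
        using g_convex tk unfolding convex_ereal_def xs2 by blast
      then show ?thesis using G Gh by simp
    qed
    then show ?thesis using gh inO xs by auto
  qed
  have inv: "x k \<in> \<Omega> \<and> g (x k) \<noteq> \<infinity>" for k
  proof (induction k)
    case 0 then show ?case using x0 x0_dom by simp
  next
    case (Suc k) then show ?case using step by blast
  qed
  have xO: "x k \<in> \<Omega>" for k using inv by blast
  have ghfin: "g (xh k) \<noteq> \<infinity>" for k using step inv by blast
  define G where "G = (\<lambda>k. real_of_ereal (g (x k)))"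
  define Gh where "Gh = (\<lambda>k. real_of_ereal (g (xh k)))"
  define hr where "hr = (\<lambda>k. f (x k) + G k)"
  have G: "g (x k) = ereal (G k)" for k unfolding G_def using fin_ereal inv by blast
  have Gh: "g (xh k) = ereal (Gh k)" for k unfolding Gh_def using fin_ereal ghfin by blast
  have hx: "h (x k) = ereal (hr k)" for k using xO[of k] G[of k] by (simp add: h_def extf_def hr_def)
  have xs: "x (Suc k) = x k + t k *\<^sub>R v k" for k using x_step unfolding t_def by simp
  have xs2: "x (Suc k) = (1 - t k) *\<^sub>R x k + t k *\<^sub>R xh k" for k
      unfolding xs v_def by (simp add: algebra_simps)
  have phi_eq: "\<phi> k s = ereal (f (x k + s *\<^sub>R v k) + s * Gh k + (1 - s) * G k)"
    if "x k + s *\<^sub>R v k \<in> \<Omega>" for k s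
    using that unfolding \<phi>_def Gh G by (simp add: extf_def)
  have Gstep: "G (Suc k) \<le> t k * Gh k + (1 - t k) * G k" for k
  proof (cases "t k = 1")
    case True then show ?thesis using xs2[of k] Gh[of k] G[of "Suc k"] by simp
  next
    case False
    then have "t k < 1" "0 < t k" using tpos[of k] by auto
    then have "g (x (Suc k)) \<le> ereal (1 - t k) * g (x k) + ereal (t k) * g (xh k)"
      using g_convex unfolding convex_ereal_def xs2 by blast
    then show ?thesis using G Gh by simp
  qed
  have armijo_raw: "f (x (Suc k)) + t k * Gh k + (1 - t k) * G k \<le> hr k - \<alpha> * t k / 2 * q k" for k
  proof -
    have "\<phi> k (t k) \<le> ereal (hr k - \<alpha> * t k / 2 * q k)"
      using ls_ok[of k] hx[of k] unfolding t_def q_def by simp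
    then show ?thesis using phi_eq[of k "t k"] xO[of "Suc k"] xs[of k] by simp
  qed
  have armijo: "hr (Suc k) \<le> hr k - \<alpha> * t k / 2 * q k" for k
    using armijo_raw[of k] Gstep[of k] unfolding hr_def by linarith
  have lset: "finite {k + 1 - M..k}" "{k + 1 - M..k} \<noteq> {}" "k \<in> {k + 1 - M..k}" for k
    using M_pos by auto
  have l_le: "l k y \<le> f y" if "y \<in> \<Omega>" for k y
    unfolding l_def using lset[of k]
    by (subst Max_le_iff) (auto intro: tangent_ineq[OF \<Omega>_open \<Omega>_convex f_convex f_grad xO that])
  have l_ge: "f (x k) + gradf (x k) \<bullet> (y - x k) \<le> l k y" for k y
    unfolding l_def using lset[of k] by (intro Max_ge) auto
  have prox_real: "l k (xh k) + Gh k + q k / 2 \<le> l k y + gy + (y - x k) \<bullet> (Q k *v (y - x k)) / 2"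
    if "g y = ereal gy" for k y gy
    using prox[of k y] that Gh[of k] unfolding q_def v_def by simp
  define \<Delta> where "\<Delta> = (\<lambda>k. gradf (x k) \<bullet> v k + Gh k - G k)"
  have Delta_le: "\<Delta> k \<le> - q k / 2" for k
  proof -
    have "l k (xh k) + Gh k + q k / 2 \<le> l k (x k) + G k + (x k - x k) \<bullet> (Q k *v (x k - x k)) / 2"
      by (rule prox_real[OF G])
    moreover have "l k (x k) \<le> f (x k)" by (rule l_le[OF xO])
    moreover have "f (x k) + gradf (x k) \<bullet> v k \<le> l k (xh k)" using l_ge[of k "xh k"] unfolding v_def .
    ultimately show ?thesis unfolding \<Delta>_def by simp
  qed
  have q_nonneg: "0 \<le> q k" for k using q_lo[of "v k" k] lmin0 unfolding q_def
    by (smt (verit) mult_nonneg_nonneg zero_le_power2)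
  have accept: "\<phi> k s \<le> h (x k) - ereal (\<alpha> * s / 2 * (v k \<bullet> (Q k *v v k)))"
    if s: "0 < s" "s \<le> 1" and sO: "x k + s *\<^sub>R v k \<in> \<Omega>" and sL: "Lp * s \<le> (1 - \<alpha>) * lmin / 2" for k s
  proof -
    have d: "f (x k + s *\<^sub>R v k) \<le> f (x k) + s * (gradf (x k) \<bullet> v k) + Lp * s^2 * (norm (v k))^2"
      by (rule descent_ineq[OF \<Omega>_convex \<Omega>_open f_grad lip xO sO s(1)]) (use Lp in auto)
    have "Lp * s^2 * (norm (v k))^2 = s * ((Lp * s) * (norm (v k))^2)" by (simp add: power2_eq_square)
    also have "\<dots> \<le> s * (((1 - \<alpha>) * lmin / 2) * (norm (v k))^2)"
      using s sL by (intro mult_left_mono mult_right_mono) auto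
    also have "\<dots> = s * ((1 - \<alpha>) / 2) * (lmin * (norm (v k))^2)" by simp
    also have "\<dots> \<le> s * ((1 - \<alpha>) / 2) * q k"
      using q_lo[of "v k" k] s \<alpha> unfolding q_def by (intro mult_left_mono) auto
    finally have e: "Lp * s^2 * (norm (v k))^2 \<le> s * ((1 - \<alpha>) / 2) * q k" .
    have "s * \<Delta> k \<le> s * (- q k / 2)" using Delta_le[of k] s by (intro mult_left_mono) auto
    then have "f (x k + s *\<^sub>R v k) + s * Gh k + (1 - s) * G k \<le> hr k - \<alpha> * s / 2 * q k"
      using d e unfolding \<Delta>_def hr_def by (simp add: algebra_simps)
    then show ?thesis using phi_eq[OF sO] hx[of k] unfolding q_def by simp
  qed
  have decrease: "hr (Suc k) \<le> hr k + t k * \<Delta> k + Lp * (t k)^2 * (norm (v k))^2" for k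
  proof -
    have d: "f (x k + t k *\<^sub>R v k) \<le> f (x k) + t k * (gradf (x k) \<bullet> v k) + Lp * (t k)^2 * (norm (v k))^2"
      by (rule descent_ineq[OF \<Omega>_convex \<Omega>_open f_grad lip xO _ tpos(1)]) (use Lp xO[of "Suc k"] xs in auto)
    show ?thesis using d Gstep[of k] xs[of k] unfolding hr_def \<Delta>_def by (simp add: algebra_simps)
  qed
  have hr_dec: "hr (Suc k) \<le> hr k" for k
  proof -
    have "0 \<le> \<alpha> * t k / 2 * q k" using \<alpha> tpos[of k] q_nonneg[of k] by simp
    then show ?thesis using armijo[of k] by linarith
  qed
  have dec: "decseq hr" by (rule decseq_SucI) (rule hr_dec)
  have hneinf: "h z = \<infinity>" if "z \<notin> \<Omega>" for z
    using that g_not_minf[of z] by (simp add: h_def extf_def)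
  have key: "ereal L0 \<le> h y" if L0lim: "hr \<longlonglongrightarrow> L0" and L0le: "\<forall>i. L0 \<le> hr i" for L0 y
  proof (rule ccontr)
    assume "\<not> ereal L0 \<le> h y"
    then have hy: "h y < ereal L0" by simp
    have yO: "y \<in> \<Omega>" using hy hneinf by force
    have gyfin: "g y \<noteq> \<infinity>" using hy yO by (auto simp: h_def extf_def)
    obtain gy where gy: "g y = ereal gy" using fin_ereal[OF gyfin] by blast
    define hs where "hs = f y + gy"
    have "h y = ereal hs" using yO gy by (simp add: h_def extf_def hs_def)
    then have hsL: "hs < L0" using hy by simp
    define K where "K = {z. h z \<le> ereal (hr 0)}"
    have cK: "compact K" unfolding K_def by (rule h_compact_sublevel)
    have KO: "K \<subseteq> \<Omega>" unfolding K_def using hneinf by force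
    have xK: "x k \<in> K" for k unfolding K_def using hx[of k] decseqD[OF dec, of 0 k] by simp
    obtain \<delta> where \<delta>: "\<delta> > 0" "(\<Union>z\<in>K. ball z \<delta>) \<subseteq> \<Omega>"
      using compact_subset_open_imp_ball_epsilon_subset[OF cK \<Omega>_open KO] by blast
    have ballO: "ball (x k) \<delta> \<subseteq> \<Omega>" for k using \<delta> xK[of k] by blast
    obtain a where a: "\<forall>z\<in>K. norm z \<le> a" using compact_imp_bounded[OF cK] unfolding bounded_iff by blast
    define R where "R = norm y + a"
    have wR: "norm (y - x k) \<le> R" for k
      using norm_triangle_ineq4[of y "x k"] a xK[of k] unfolding R_def by fastforce
    have R0: "0 \<le> R" using wR[of 0] norm_ge_zero[of "y - x 0"] by linarith
    have lmax0: "0 \<le> lmax" unfolding lmax_def using \<mu>minmax \<tau>min C0 by simp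
    define D where "D = (C + lmax) * R^2 + 1"
    have D0: "0 < D"
    proof -
      have "0 \<le> (C + lmax) * R^2" using C0 lmax0 by simp
      then show ?thesis unfolding D_def by linarith
    qed
    define gap where "gap = L0 - hs"
    have gap0: "0 < gap" unfolding gap_def using hsL by simp
    define s where "s = min (1/2) (gap / D)"
    have s0: "0 < s" "s \<le> 1/2" unfolding s_def using gap0 D0 by (simp_all only: min.cobounded1) simp
    have sD: "s * D \<le> gap" unfolding s_def using D0 gap0
      by (metis min.cobounded2 nonzero_mult_div_cancel_left order_less_irrefl pos_le_divide_eq mult.commute)
    define c where "c = s * gap / 2"
    have c0: "0 < c" unfolding c_def using s0 gap0 by simp
    have Delta_c: "\<Delta> k \<le> - c" for k
    proof -
      define ys where "ys = (1 - s) *\<^sub>R x k + s *\<^sub>R y"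
      have ysO: "ys \<in> \<Omega>" unfolding ys_def using s0 xO[of k] yO by (intro convexD_alt[OF \<Omega>_convex]) auto
      have "g ys \<le> ereal (1 - s) * g (x k) + ereal s * g y"
        using g_convex s0 unfolding convex_ereal_def ys_def by auto
      then have gys: "g ys \<le> ereal ((1 - s) * G k + s * gy)" using G[of k] gy by simp
      then have "g ys \<noteq> \<infinity>" by auto
      then obtain gs where gs: "g ys = ereal gs" using fin_ereal by blast
      have gs_le: "gs \<le> (1 - s) * G k + s * gy" using gys gs by simp
      have fys: "f ys \<le> (1 - s) * f (x k) + s * f y"
        unfolding ys_def using s0 xO[of k] yO by (intro convex_onD[OF f_convex]) auto
      have ysx: "ys - x k = s *\<^sub>R (y - x k)" unfolding ys_def by (simp add: algebra_simps)
      have "(ys - x k) \<bullet> (Q k *v (ys - x k)) \<le> (C + lmax) * (norm (ys - x k))^2" by (rule q_hi)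
      also have "\<dots> = s^2 * ((C + lmax) * (norm (y - x k))^2)" using s0 unfolding ysx
        by (simp add: power_mult_distrib)
      also have "\<dots> \<le> s^2 * ((C + lmax) * R^2)"
        using wR[of k] C0 lmax0 by (intro mult_left_mono mult_left_mono power_mono) auto
      also have "\<dots> \<le> s^2 * D" unfolding D_def by (intro mult_left_mono) auto
      finally have qy: "(ys - x k) \<bullet> (Q k *v (ys - x k)) \<le> s^2 * D" .
      have pr: "l k (xh k) + Gh k + q k / 2 \<le> l k ys + gs + (ys - x k) \<bullet> (Q k *v (ys - x k)) / 2"
        by (rule prox_real[OF gs])
      have "l k ys \<le> f ys" by (rule l_le[OF ysO])
      have lx: "f (x k) + gradf (x k) \<bullet> v k \<le> l k (xh k)" using l_ge[of k "xh k"] unfolding v_def .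
      have m1: "s * gap \<le> s * (hr k - hs)" using L0le s0 unfolding gap_def by (intro mult_left_mono) auto
      have m2: "s^2 * D \<le> s * gap" using sD s0 by (simp add: power2_eq_square mult.assoc mult_left_mono)
      have e: "- s * (hr k - hs) = - s * f (x k) - s * G k + s * f y + s * gy"
        by (simp add: hr_def hs_def algebra_simps)
      have gs2: "gs \<le> G k - s * G k + s * gy" using gs_le by (simp add: algebra_simps)
      have fys2: "f ys \<le> f (x k) - s * f (x k) + s * f y" using fys by (simp add: algebra_simps)
      have "\<Delta> k \<le> - s * (hr k - hs) + s^2 * D / 2"
        unfolding e \<Delta>_def using pr \<open>l k ys \<le> f ys\<close> lx gs2 fys2 qy q_nonneg[of k] by linarith
      then show ?thesis using m1 m2 unfolding c_def by linarith
    qed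
    have dh: "(\<lambda>k. hr k - hr (Suc k)) \<longlonglongrightarrow> 0"
      using tendsto_diff[OF L0lim LIMSEQ_Suc[OF L0lim]] by simp
    have A: "(\<lambda>k. t k * (norm (v k))^2) \<longlonglongrightarrow> 0"
    proof (rule tendsto_sandwich[of "\<lambda>_. 0" _ _ "\<lambda>k. (2 / (\<alpha> * lmin)) * (hr k - hr (Suc k))"])
      show "\<forall>\<^sub>F k in sequentially. 0 \<le> t k * (norm (v k))^2"
      proof (intro always_eventually allI)
        fix k show "0 \<le> t k * (norm (v k))^2" using tpos(1)[of k] by simp
      qed
      show "\<forall>\<^sub>F k in sequentially. t k * (norm (v k))^2 \<le> (2 / (\<alpha> * lmin)) * (hr k - hr (Suc k))"
      proof (intro always_eventually allI)
        fix k
        have "\<alpha> * lmin / 2 * (t k * (norm (v k))^2) = \<alpha> * t k / 2 * (lmin * (norm (v k))^2)" by simp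
        also have "\<dots> \<le> \<alpha> * t k / 2 * q k"
          using q_lo[of "v k" k] \<alpha> tpos[of k] unfolding q_def by (intro mult_left_mono) auto
        also have "\<dots> \<le> hr k - hr (Suc k)" using armijo[of k] by simp
        finally show "t k * (norm (v k))^2 \<le> (2 / (\<alpha> * lmin)) * (hr k - hr (Suc k))"
          using \<alpha> lmin0 by (simp add: field_simps)
      qed
      show "((\<lambda>k. (2 / (\<alpha> * lmin)) * (hr k - hr (Suc k))) \<longlongrightarrow> 0) sequentially"
        by (rule tendsto_mult_right_zero[OF dh])
    qed simp
    have B: "t \<longlonglongrightarrow> 0"
    proof (rule tendsto_sandwich[of "\<lambda>_. 0" _ _ "\<lambda>k. ((hr k - hr (Suc k)) + Lp * (t k * (norm (v k))^2)) / c"])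
      show "\<forall>\<^sub>F k in sequentially. 0 \<le> t k"
      proof (intro always_eventually allI)
        fix k show "0 \<le> t k" using tpos(1)[of k] by simp
      qed
      show "\<forall>\<^sub>F k in sequentially. t k \<le> ((hr k - hr (Suc k)) + Lp * (t k * (norm (v k))^2)) / c"
      proof (intro always_eventually allI)
        fix k
        have "t k * \<Delta> k \<le> t k * (- c)" using Delta_c[of k] tpos[of k] by (intro mult_left_mono) auto
        moreover have "Lp * (t k)^2 * (norm (v k))^2 \<le> Lp * (t k * (norm (v k))^2)"
        proof -
          have "(t k)^2 \<le> t k" using tpos[of k] by (simp add: power2_eq_square mult_le_cancel_left1)
          then have "(t k)^2 * (norm (v k))^2 \<le> t k * (norm (v k))^2" by (intro mult_right_mono) auto
          then show ?thesis using Lp by (simp add: mult.assoc mult_left_mono)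
        qed
        ultimately have "c * t k \<le> (hr k - hr (Suc k)) + Lp * (t k * (norm (v k))^2)"
          using decrease[of k] by (simp add: algebra_simps)
        then show "t k \<le> ((hr k - hr (Suc k)) + Lp * (t k * (norm (v k))^2)) / c"
          using c0 by (simp add: field_simps)
      qed
      have "(\<lambda>k. (hr k - hr (Suc k)) + Lp * (t k * (norm (v k))^2)) \<longlonglongrightarrow> 0 + Lp * 0"
        by (intro tendsto_add tendsto_mult dh A tendsto_const)
      then show "(\<lambda>k. ((hr k - hr (Suc k)) + Lp * (t k * (norm (v k))^2)) / c) \<longlonglongrightarrow> 0"
        using tendsto_divide[of _ 0 sequentially "\<lambda>_. c" c] c0 by simp
    qed simp
    define T where "T = \<beta> * min 1 ((1 - \<alpha>) * lmin / (2 * Lp))"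
    have T0: "0 < T" unfolding T_def using \<beta> \<alpha> lmin0 Lp by simp
    have ev1: "\<forall>\<^sub>F k in sequentially. t k < T" using order_tendstoD(2)[OF B T0] .
    have ev2: "\<forall>\<^sub>F k in sequentially. t k * (norm (v k))^2 < \<beta> * \<delta>^2"
      using order_tendstoD(2)[OF A] \<beta> \<delta> by simp
    obtain k where k1: "t k < T" and k2: "t k * (norm (v k))^2 < \<beta> * \<delta>^2"
      using eventually_conj[OF ev1 ev2] eventually_sequentially by auto
    have "T \<le> \<beta>" unfolding T_def using \<beta> by (simp add: mult_le_cancel_left1)
    have "j k \<noteq> 0"
    proof
      assume "j k = 0"
      then have "t k = 1" unfolding t_def by simp
      then show False using k1 \<open>T \<le> \<beta>\<close> \<beta> by simp
    qed
    then obtain i where ji: "j k = Suc i" by (cases "j k") auto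
    define \<tau> where "\<tau> = \<beta> ^ i"
    have tk: "t k = \<beta> * \<tau>" unfolding t_def \<tau>_def ji by simp
    have \<tau>0: "0 < \<tau>" unfolding \<tau>_def using \<beta> by simp
    have \<tau>m: "\<tau> < min 1 ((1 - \<alpha>) * lmin / (2 * Lp))" using k1 \<beta> unfolding tk T_def by simp
    have \<tau>1: "\<tau> \<le> 1" using \<tau>m by simp
    have \<tau>L: "Lp * \<tau> \<le> (1 - \<alpha>) * lmin / 2" using \<tau>m Lp by (simp add: field_simps)
    have fail: "\<not> (\<phi> k \<tau> \<le> h (x k) - ereal (\<alpha> * \<tau> / 2 * (v k \<bullet> (Q k *v v k))))"
      using ls_min[of i k] ji unfolding \<tau>_def by simp
    have big: "\<delta> \<le> \<tau> * norm (v k)"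
    proof (rule ccontr)
      assume "\<not> \<delta> \<le> \<tau> * norm (v k)"
      then have "x k + \<tau> *\<^sub>R v k \<in> ball (x k) \<delta>" using \<tau>0 by (simp add: dist_norm)
      then have "x k + \<tau> *\<^sub>R v k \<in> \<Omega>" using ballO by blast
      then show False using accept[OF \<tau>0 \<tau>1 _ \<tau>L] fail by blast
    qed
    have "\<beta> * \<delta>^2 \<le> \<beta> * (\<tau> * norm (v k))^2"
      using big \<delta> \<beta> by (intro mult_left_mono power_mono) auto
    also have "\<dots> = \<beta> * \<tau> * (\<tau> * (norm (v k))^2)" by (simp add: power2_eq_square)
    also have "\<dots> \<le> \<beta> * \<tau> * (1 * (norm (v k))^2)"
      using \<tau>1 \<tau>0 \<beta> by (intro mult_left_mono mult_right_mono) auto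
    also have "\<dots> = t k * (norm (v k))^2" using tk by simp
    finally show False using k2 by simp
  qed
  show ?thesis
  proof (cases "\<exists>B. \<forall>i. B \<le> hr i")
    case True
    then obtain B where "\<forall>i. B \<le> hr i" by blast
    then obtain L0 where L0: "hr \<longlonglongrightarrow> L0" "\<forall>i. L0 \<le> hr i" using decseq_convergent[OF dec] by blast
    have "(INF y. h y) \<le> ereal L0"
    proof (rule LIMSEQ_le_const)
      show "(\<lambda>k. ereal (hr k)) \<longlonglongrightarrow> ereal L0" using L0(1) by (simp add: lim_ereal)
      show "\<exists>N. \<forall>n\<ge>N. (INF y. h y) \<le> ereal (hr n)" using INF_lower[of _ UNIV h] hx by (metis UNIV_I)
    qed
    moreover have "ereal L0 \<le> (INF y. h y)" by (rule INF_greatest) (use key[OF L0] in auto)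
    ultimately have "(INF y. h y) = ereal L0" by simp
    then show ?thesis unfolding hx using L0(1) by (simp add: lim_ereal)
  next
    case False
    then have unb: "\<exists>i. hr i < r" for r by (meson not_le)
    have lim: "(\<lambda>k. h (x k)) \<longlonglongrightarrow> -\<infinity>"
      unfolding tendsto_MInfty
    proof
      fix r
      obtain i where "hr i < r" using unb by blast
      then show "\<forall>\<^sub>F k in sequentially. h (x k) < ereal r"
        unfolding eventually_sequentially hx using decseqD[OF dec, of i] by (auto intro: le_less_trans)
    qed
    have "(INF y. h y) = -\<infinity>"
    proof (cases "INF y. h y")
      case (real r0)
      obtain i where "hr i < r0" using unb by blast
      moreover have "(INF y. h y) \<le> h (x i)" by (rule INF_lower) simp
      ultimately show ?thesis using real hx[of i] by simp
    next
      case PInf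
      have "(INF y. h y) \<le> h (x 0)" by (rule INF_lower) simp
      then show ?thesis using PInf hx[of 0] by simp
    qed simp
    then show ?thesis using lim by simp
  qed
qed

end
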